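(* Let $\sigma:[0,\infty)\to[0,\infty)$ be nondecreasing with $\lim_{t\to\infty}\sigma(t)=\infty$. Assume that $\sigma^{\iota}\sim((\sigma^{\iota})_{\star})^{\star}$ on $(0,\infty)$. Then $\gamma(\sigma)+1=\gamma((\sigma^{\iota})_{\star})$.
   Context: $\sigma^{\iota}(t):=\sigma(1/t)$ for $t>0$ (nonincreasing, tending to $\infty$ as $t\to0$). For $h:(0,\infty)\to[0,\infty)$ nonincreasing with $\lim_{t\to0}h(t)=\infty$, its lower Legendre conjugate is $h_{\star}(t):=\inf_{s>0}\{h(s)+ts\}$, $t\ge0$ (nondecreasing, concave, tending to $\infty$). For a nondecreasing $g$, its upper Legendre conjugate is $g^{\star}(s):=\sup_{t\ge0}\{g(t)-st\}$, $s>0$; $((\sigma^{\iota})_{\star})^{\star}$ is the largest convex minorant of $\sigma^{\iota}$. $f\sim g$ on an interval $I$ means there is $C\ge1$ with $C^{-1}g-C\le f\le Cg+C$ on $I$. For a nondecreasing function $\sigma$ tending to $\infty$ and $\gamma>0$, $(P_{\sigma,\gamma})$ holds if there is $K>1$ with $\limsup_{t\to\infty}\sigma(K^{\gamma}t)/\sigma(t)<K$; $\gamma(\sigma):=\sup\{\gamma>0:(P_{\sigma,\gamma})\text{ holds}\}$, and $:=0$ if none holds. *)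

theory Defs
  imports "HOL-Analysis.Analysis"
begin

definition iota :: "(real \<Rightarrow> real) \<Rightarrow> real \<Rightarrow> real" where
  "iota \<sigma> t = \<sigma> (1 / t)"

text \<open>lower Legendre conjugate, used for t >= 0\<close>
definition lower_conj :: "(real \<Rightarrow> real) \<Rightarrow> real \<Rightarrow> real" where
  "lower_conj h t = (INF s\<in>{0<..}. h s + t * s)"

text \<open>upper Legendre conjugate, used for s > 0\<close>
definition upper_conj :: "(real \<Rightarrow> real) \<Rightarrow> real \<Rightarrow> real" where
  "upper_conj g s = (SUP t\<in>{0..}. g t - s * t)"

definition equiv_on :: "real set \<Rightarrow> (real \<Rightarrow> real) \<Rightarrow> (real \<Rightarrow> real) \<Rightarrow> bool" where
  "equiv_on I f g \<longleftrightarrow> (\<exists>C\<ge>1. \<forall>t\<in>I. g t / C - C \<le> f t \<and> f t \<le> C * g t + C)"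

definition P_prop :: "(real \<Rightarrow> real) \<Rightarrow> real \<Rightarrow> bool" where
  "P_prop \<sigma> \<gamma> \<longleftrightarrow> (\<exists>K>1. Limsup at_top (\<lambda>t. ereal (\<sigma> (K powr \<gamma> * t) / \<sigma> t)) < ereal K)"

definition gamma_idx :: "(real \<Rightarrow> real) \<Rightarrow> ereal" where
  "gamma_idx \<sigma> = (if \<exists>\<gamma>>0. P_prop \<sigma> \<gamma>
      then Sup (ereal ` {\<gamma>. \<gamma> > 0 \<and> P_prop \<sigma> \<gamma>}) else 0)"

end

theory Submission
  imports Defs
begin

lemma g_le:
  assumes nn: "\<forall>t\<ge>0. \<sigma> t \<ge> 0" and t: "t \<ge> 0" and u: "u > 0"
  shows "lower_conj (iota \<sigma>) t \<le> \<sigma> u + t / u"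
proof -
  have bdd: "bdd_below ((\<lambda>s. iota \<sigma> s + t * s) ` {0<..})"
    unfolding bdd_below_def
  proof (intro exI ballI)
    fix y assume "y \<in> (\<lambda>s. iota \<sigma> s + t * s) ` {0<..}"
    then obtain s where s: "s > 0" "y = \<sigma> (1/s) + t * s" by (auto simp: iota_def)
    have "\<sigma> (1/s) \<ge> 0" using nn s by auto
    moreover have "t * s \<ge> 0" using t s by auto
    ultimately show "0 \<le> y" using s by linarith
  qed
  have "lower_conj (iota \<sigma>) t \<le> iota \<sigma> (1/u) + t * (1/u)"
    unfolding lower_conj_def using u by (intro cINF_lower[OF bdd]) auto
  then show ?thesis by (simp add: iota_def)
qed

lemma g_ge:
  assumes "\<And>u. u > 0 \<Longrightarrow> B \<le> \<sigma> u + t / u"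
  shows "B \<le> lower_conj (iota \<sigma>) t"
  unfolding lower_conj_def
proof (rule cINF_greatest)
  show "{0<..} \<noteq> ({}::real set)" by auto
next
  fix s :: real assume "s \<in> {0<..}"
  then have s: "s > 0" by auto
  have "B \<le> \<sigma> (1/s) + t / (1/s)" using assms[of "1/s"] s by auto
  then show "B \<le> iota \<sigma> s + t * s" by (simp add: iota_def)
qed

lemma g_nonneg:
  assumes nn: "\<forall>t\<ge>0. \<sigma> t \<ge> 0" and t: "t \<ge> 0"
  shows "0 \<le> lower_conj (iota \<sigma>) t"
proof (rule g_ge)
  fix u :: real assume "u > 0"
  then show "0 \<le> \<sigma> u + t / u" using nn t by (simp add: add_nonneg_nonneg)
qed

lemma g_scale:
  assumes nn: "\<forall>t\<ge>0. \<sigma> t \<ge> 0" and t: "t \<ge> 0" and L: "L \<ge> 1"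
  shows "lower_conj (iota \<sigma>) (L * t) \<le> L * lower_conj (iota \<sigma>) t"
proof -
  have "lower_conj (iota \<sigma>) (L * t) / L \<le> lower_conj (iota \<sigma>) t"
  proof (rule g_ge)
    fix u :: real assume u: "u > 0"
    have "lower_conj (iota \<sigma>) (L * t) \<le> \<sigma> u + L * t / u"
      using g_le[OF nn _ u, of "L*t"] t L by auto
    also have "\<dots> \<le> L * (\<sigma> u + t / u)"
    proof -
      have "\<sigma> u \<ge> 0" using nn u by auto
      then have "\<sigma> u \<le> L * \<sigma> u" using L by (simp add: mult_le_cancel_right1)
      then show ?thesis by (simp add: algebra_simps)
    qed
    finally show "lower_conj (iota \<sigma>) (L * t) / L \<le> \<sigma> u + t / u"
      using L by (simp add: divide_le_eq mult.commute)
  qed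
  then show ?thesis using L by (simp add: divide_le_eq mult.commute)
qed

lemma partC:
  assumes nn: "\<forall>t\<ge>0. \<sigma> t \<ge> 0" and g: "0 < \<gamma>" "\<gamma> < 1"
  shows "P_prop (lower_conj (iota \<sigma>)) \<gamma>"
  unfolding P_prop_def
proof (intro exI conjI)
  let ?g = "lower_conj (iota \<sigma>)"
  let ?L = "(2::real) powr \<gamma>"
  have L1: "?L \<ge> 1" using g by (intro ge_one_powr_ge_zero) auto
  have L2: "?L < 2" using g powr_less_mono[of \<gamma> 1 2] by simp
  have "eventually (\<lambda>t. ereal (?g (?L * t) / ?g t) \<le> ereal ?L) at_top"
    using eventually_ge_at_top[of "0::real"]
  proof eventually_elim
    case (elim t)
    have a: "?g (?L * t) \<le> ?L * ?g t" by (rule g_scale[OF nn elim L1])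
    have "?g (?L * t) / ?g t \<le> ?L"
    proof (cases "?g t = 0")
      case True then show ?thesis by simp
    next
      case False
      then have "?g t > 0" using g_nonneg[OF nn elim] by linarith
      then show ?thesis using a by (simp add: divide_le_eq)
    qed
    then show ?case by simp
  qed
  then have "Limsup at_top (\<lambda>t. ereal (?g (?L * t) / ?g t)) \<le> ereal ?L"
    by (rule Limsup_bounded)
  also have "\<dots> < ereal 2" using L2 by simp
  finally show "Limsup at_top (\<lambda>t. ereal (?g (2 powr \<gamma> * t) / ?g t)) < ereal 2" .
qed (simp)

lemma partA:
  assumes nn: "\<forall>t\<ge>0. \<sigma> t \<ge> 0" and lim: "filterlim \<sigma> at_top at_top"
    and g: "0 < \<gamma>" and P: "P_prop \<sigma> \<gamma>"
  shows "P_prop (lower_conj (iota \<sigma>)) (\<gamma> + 1)"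
proof -
  let ?g = "lower_conj (iota \<sigma>)"
  obtain K0 where K0: "K0 > 1" and ls: "Limsup at_top (\<lambda>t. ereal (\<sigma> (K0 powr \<gamma> * t) / \<sigma> t)) < ereal K0"
    using P unfolding P_prop_def by blast
  obtain q where q1: "Limsup at_top (\<lambda>t. ereal (\<sigma> (K0 powr \<gamma> * t) / \<sigma> t)) < ereal q" and q2: "ereal q < ereal K0"
    using ereal_dense2[OF ls] by blast
  define q' where "q' = max q 1"
  have q'1: "q' \<ge> 1" and q'K: "q' < K0" using q2 K0 by (auto simp: q'_def)
  define L where "L = K0 powr \<gamma>"
  have L1: "L > 1" using K0 g by (simp add: L_def)
  have ev1: "eventually (\<lambda>t. ereal (\<sigma> (L * t) / \<sigma> t) < ereal q) at_top"
    using Limsup_lessD[OF q1] by (simp add: L_def)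
  have ev2: "eventually (\<lambda>t. 1 \<le> \<sigma> t) at_top" using lim by (simp add: filterlim_at_top)
  have "eventually (\<lambda>t. \<sigma> (L * t) \<le> q' * \<sigma> t) at_top"
    using ev1 ev2
  proof eventually_elim
    case (elim t)
    then have "\<sigma> (L * t) / \<sigma> t < q" by simp
    then have "\<sigma> (L * t) < q * \<sigma> t" using elim(2) by (simp add: divide_less_eq)
    moreover have "q * \<sigma> t \<le> q' * \<sigma> t" using elim(2) by (simp add: q'_def mult_right_mono)
    ultimately show ?case by simp
  qed
  then obtain u1 where u1: "\<And>u. u \<ge> u1 \<Longrightarrow> \<sigma> (L * u) \<le> q' * \<sigma> u"
    by (auto simp: eventually_at_top_linorder)
  define u0 where "u0 = max u1 1"
  have u0: "u0 > 0" "\<And>u. u \<ge> u0 \<Longrightarrow> \<sigma> (L * u) \<le> q' * \<sigma> u" using u1 by (auto simp: u0_def)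
  define T where "T = max 0 (2 * u0 * \<sigma> (2 * L * u0) / q')"
  have key: "?g (L * q' * t) \<le> q' * ?g t" if t: "t \<ge> T" for t
  proof -
    have t0: "t \<ge> 0" using t by (simp add: T_def)
    have "?g (L * q' * t) / q' \<le> ?g t"
    proof (rule g_ge)
      fix u :: real assume u: "u > 0"
      have Lqt: "L * q' * t \<ge> 0" using L1 q'1 t0 by simp
      show "?g (L * q' * t) / q' \<le> \<sigma> u + t / u"
      proof (cases "u \<ge> u0")
        case True
        have "?g (L * q' * t) \<le> \<sigma> (L * u) + L * q' * t / (L * u)"
          using g_le[OF nn Lqt, of "L * u"] u L1 by simp
        also have "L * q' * t / (L * u) = q' * (t / u)" using L1 by simp
        also have "\<sigma> (L * u) \<le> q' * \<sigma> u" using u0(2)[OF True] .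
        finally have "?g (L * q' * t) \<le> q' * (\<sigma> u + t / u)" by (simp add: algebra_simps)
        then show ?thesis using q'1 by (simp add: divide_le_eq mult.commute)
      next
        case False
        have pos: "2 * L * u0 > 0" using L1 u0 by simp
        have "?g (L * q' * t) \<le> \<sigma> (2 * L * u0) + L * q' * t / (2 * L * u0)"
          using g_le[OF nn Lqt pos] .
        also have "L * q' * t / (2 * L * u0) = q' * t / (2 * u0)" using L1 by simp
        also have "\<sigma> (2 * L * u0) \<le> q' * t / (2 * u0)"
        proof -
          have "2 * u0 * \<sigma> (2 * L * u0) / q' \<le> t" using t by (simp add: T_def)
          then have "2 * u0 * \<sigma> (2 * L * u0) \<le> t * q'" using q'1 by (simp add: divide_le_eq)
          then show ?thesis using u0 by (simp add: le_divide_eq mult.commute)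
        qed
        finally have a: "?g (L * q' * t) \<le> q' * (t / u0)" by simp
        have "t / u0 \<le> t / u" using False u t0 by (simp add: frac_le)
        moreover have "\<sigma> u \<ge> 0" using nn u by simp
        ultimately have "t / u0 \<le> \<sigma> u + t / u" by linarith
        then have "?g (L * q' * t) \<le> q' * (\<sigma> u + t / u)"
        proof -
          have "q' * (t / u0) \<le> q' * (\<sigma> u + t / u)"
            using \<open>t / u0 \<le> \<sigma> u + t / u\<close> q'1 by (intro mult_left_mono) auto
          then show ?thesis using a by linarith
        qed
        then show ?thesis using q'1 by (simp add: divide_le_eq mult.commute)
      qed
    qed
    then show ?thesis using q'1 by (simp add: divide_le_eq mult.commute)
  qed
  define K where "K = (L * q') powr (1 / (\<gamma> + 1))"
  have KL: "K powr (\<gamma> + 1) = L * q'"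
    using L1 q'1 g by (simp add: K_def powr_powr)
  have K1: "K > 1"
  proof -
    have "L * q' > 1" using L1 q'1 by (metis less_1_mult less_le_trans mult.comm_neutral mult_left_mono order_le_less zero_less_one)
    then show ?thesis using g unfolding K_def by (intro gr_one_powr) auto
  qed
  have qK: "q' < K"
  proof -
    have "q' powr \<gamma> < L" using powr_less_mono2[OF g _ q'K] q'1 by (simp add: L_def)
    then have "q' powr (\<gamma> + 1) < L * q'" using q'1 by (simp add: powr_add)
    then have "(q' powr (\<gamma> + 1)) powr (1 / (\<gamma> + 1)) < K"
      unfolding K_def using g q'1 by (intro powr_less_mono2) auto
    then show ?thesis using g q'1 by (simp add: powr_powr)
  qed
  have "eventually (\<lambda>t. ereal (?g (K powr (\<gamma> + 1) * t) / ?g t) \<le> ereal q') at_top"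
    using eventually_ge_at_top[of T]
  proof eventually_elim
    case (elim t)
    have t0: "t \<ge> 0" using elim by (simp add: T_def)
    have a: "?g (K powr (\<gamma> + 1) * t) \<le> q' * ?g t" using key[OF elim] KL by simp
    have "?g (K powr (\<gamma> + 1) * t) / ?g t \<le> q'"
    proof (cases "?g t = 0")
      case True then show ?thesis using q'1 by simp
    next
      case False
      then have "?g t > 0" using g_nonneg[OF nn t0] by linarith
      then show ?thesis using a by (simp add: divide_le_eq)
    qed
    then show ?case by simp
  qed
  then have "Limsup at_top (\<lambda>t. ereal (?g (K powr (\<gamma> + 1) * t) / ?g t)) \<le> ereal q'"
    by (rule Limsup_bounded)
  also have "\<dots> < ereal K" using qK by simp
  finally show ?thesis unfolding P_prop_def using K1 by blast
qed

lemma partB: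
  assumes nn: "\<forall>t\<ge>0. \<sigma> t \<ge> 0" and lim: "filterlim \<sigma> at_top at_top"
    and eqv: "equiv_on {0<..} (iota \<sigma>) (upper_conj (lower_conj (iota \<sigma>)))"
    and g1: "\<gamma> > 1" and P: "P_prop (lower_conj (iota \<sigma>)) \<gamma>"
  shows "P_prop \<sigma> (\<gamma> - 1)"
proof -
  let ?g = "lower_conj (iota \<sigma>)"
  obtain C where C1: "C \<ge> 1" and Cb: "\<And>s. s > 0 \<Longrightarrow> iota \<sigma> s \<le> C * upper_conj ?g s + C"
    using eqv unfolding equiv_on_def by auto
  obtain K1 where K1: "K1 > 1" and ls: "Limsup at_top (\<lambda>t. ereal (?g (K1 powr \<gamma> * t) / ?g t)) < ereal K1"
    using P unfolding P_prop_def by blast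
  obtain q where q1: "Limsup at_top (\<lambda>t. ereal (?g (K1 powr \<gamma> * t) / ?g t)) < ereal q" and q2: "ereal q < ereal K1"
    using ereal_dense2[OF ls] by blast
  define q' where "q' = max q 1"
  have q'1: "q' \<ge> 1" and q'K: "q' < K1" using q2 K1 by (auto simp: q'_def)
  define L where "L = K1 powr \<gamma>"
  have L1: "L > 1" using K1 g1 by (simp add: L_def)
  have ev1: "eventually (\<lambda>t. ereal (?g (L * t) / ?g t) < ereal q) at_top"
    using Limsup_lessD[OF q1] by (simp add: L_def)
  have "eventually (\<lambda>t. 1 \<le> \<sigma> t) at_top" using lim by (simp add: filterlim_at_top)
  then obtain u2 where u2: "\<And>u. u \<ge> u2 \<Longrightarrow> 1 \<le> \<sigma> u" by (auto simp: eventually_at_top_linorder)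
  define u1 where "u1 = max u2 1"
  have u1: "u1 > 0" "\<And>u. u \<ge> u1 \<Longrightarrow> 1 \<le> \<sigma> u" using u2 by (auto simp: u1_def)
  have gpos: "1 \<le> ?g t" if t: "t \<ge> u1" for t
  proof (rule g_ge)
    fix u :: real assume u: "u > 0"
    show "1 \<le> \<sigma> u + t / u"
    proof (cases "u \<ge> u1")
      case True
      then show ?thesis using u1(2)[OF True] u t u1 by (simp add: add_increasing2)
    next
      case False
      have "1 \<le> t / u" using False t u by (simp add: le_divide_eq)
      moreover have "\<sigma> u \<ge> 0" using nn u by simp
      ultimately show ?thesis by linarith
    qed
  qed
  have "eventually (\<lambda>t. ?g (L * t) \<le> q' * ?g t) at_top"
    using ev1 eventually_ge_at_top[of u1]
  proof eventually_elim
    case (elim t)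
    have gp: "?g t \<ge> 1" using gpos elim(2) by simp
    then have "?g (L * t) / ?g t < q" using elim by simp
    then have "?g (L * t) < q * ?g t" using gp by (simp add: divide_less_eq)
    moreover have "q * ?g t \<le> q' * ?g t" using gp by (simp add: q'_def mult_right_mono)
    ultimately show ?case by simp
  qed
  then obtain t1 where t1: "\<And>t. t \<ge> t1 \<Longrightarrow> ?g (L * t) \<le> q' * ?g t"
    by (auto simp: eventually_at_top_linorder)
  define t0 where "t0 = max t1 0"
  have t0: "t0 \<ge> 0" "\<And>t. t \<ge> t0 \<Longrightarrow> ?g (L * t) \<le> q' * ?g t" using t1 by (auto simp: t0_def)
  have iter: "?g (L ^ n * t) \<le> q' ^ n * ?g t" if t: "t \<ge> t0" for t n
  proof (induction n)
    case 0 then show ?case by simp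
  next
    case (Suc n)
    have "L ^ n \<ge> 1" using L1 by simp
    then have "L ^ n * t \<ge> t" using t t0 by (simp add: mult_le_cancel_right1)
    then have "?g (L * (L ^ n * t)) \<le> q' * ?g (L ^ n * t)" using t0(2) t by simp
    also have "\<dots> \<le> q' * (q' ^ n * ?g t)" using Suc q'1 by (simp add: mult_left_mono)
    finally show ?case by (simp add: mult.assoc)
  qed
  define \<delta> where "\<delta> = \<gamma> - 1"
  have d0: "\<delta> > 0" using g1 by (simp add: \<delta>_def)
  define a where "a = (L / q') powr (1 / \<delta>)"
  have Lq: "L / q' > 0" using L1 q'1 by simp
  have aq: "a > q'"
  proof -
    have "q' powr \<gamma> < L" using powr_less_mono2[of \<gamma> q' K1] g1 q'1 q'K by (simp add: L_def)
    moreover have "q' powr \<gamma> = q' powr \<delta> * q'" 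
    proof -
      have "q' powr \<gamma> = q' powr (\<delta> + 1)" by (simp add: \<delta>_def)
      also have "\<dots> = q' powr \<delta> * q' powr 1" by (rule powr_add)
      finally show ?thesis using q'1 by simp
    qed
    ultimately have "q' powr \<delta> < L / q'" using q'1 by (simp add: less_divide_eq)
    then have "(q' powr \<delta>) powr (1 / \<delta>) < a" unfolding a_def using d0 by (intro powr_less_mono2) auto
    then show ?thesis using d0 q'1 by (simp add: powr_powr)
  qed
  define r where "r = a / q'"
  have r1: "r > 1" using aq q'1 by (simp add: r_def)
  obtain n where n: "C + 1 < r ^ n" using real_arch_pow[OF r1] by blast
  define K where "K = a ^ n"
  have apos: "a > 0" using aq q'1 by simp
  have Kr: "K = r ^ n * q' ^ n" using q'1 by (simp add: K_def r_def power_divide)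
  define M where "M = (L / q') ^ n"
  have KM: "K powr \<delta> = M"
  proof -
    have "K powr \<delta> = (a powr real n) powr \<delta>" using apos by (simp add: K_def powr_realpow)
    also have "\<dots> = (a powr \<delta>) powr real n" by (simp add: powr_powr mult.commute)
    also have "a powr \<delta> = L / q'" using d0 L1 q'1 by (simp add: a_def powr_powr)
    finally show ?thesis using Lq by (simp add: M_def powr_realpow)
  qed
  define D0 where "D0 = \<sigma> 1 + L ^ n * t0"
  have D0: "D0 \<ge> 0" using nn t0 L1 by (simp add: D0_def)
  have qn: "q' ^ n \<ge> 1" using q'1 by simp
  have Ln: "L ^ n > 0" using L1 by simp
  have Mpos: "M > 0" using Lq by (simp add: M_def)
  have bound: "\<sigma> (M * x) \<le> C * (q' ^ n * \<sigma> x) + (C * D0 + C)" if x: "x > 0" for x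
  proof -
    have s: "1 / (M * x) > 0" using x Mpos by simp
    have "upper_conj ?g (1 / (M * x)) \<le> q' ^ n * \<sigma> x + D0"
      unfolding upper_conj_def
    proof (rule cSUP_least)
      show "{0::real..} \<noteq> {}" by auto
    next
      fix t :: real assume "t \<in> {0..}"
      then have t: "t \<ge> 0" by simp
      have sx: "q' ^ n * \<sigma> x \<ge> 0" using nn x qn by simp
      have st: "1 / (M * x) * t \<ge> 0" using s t by simp
      show "?g t - 1 / (M * x) * t \<le> q' ^ n * \<sigma> x + D0"
      proof (cases "t \<ge> L ^ n * t0")
        case True
        define t' where "t' = t / L ^ n"
        have tt: "t = L ^ n * t'" using Ln unfolding t'_def by (metis less_irrefl nonzero_mult_div_cancel_left times_divide_eq_right)
        have t'0: "t' \<ge> t0" using True Ln by (simp add: t'_def le_divide_eq mult.commute)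
        have "?g t \<le> q' ^ n * ?g t'" using iter[OF t'0, of n] tt by simp
        also have "\<dots> \<le> q' ^ n * (\<sigma> x + t' / x)"
          using g_le[OF nn _ x, of t'] t'0 t0 qn by (intro mult_left_mono) auto
        finally have a1: "?g t \<le> q' ^ n * \<sigma> x + q' ^ n * (t' / x)" by (simp add: algebra_simps)
        have "1 / (M * x) * t = q' ^ n * (t' / x)"
          using tt Ln qn x L1 q'1 by (simp add: M_def power_divide field_simps)
        then show ?thesis using a1 D0 by linarith
      next
        case False
        have "?g t \<le> \<sigma> 1 + t / 1" using g_le[OF nn t, of 1] by simp
        then have "?g t \<le> D0" using False by (simp add: D0_def)
        then show ?thesis using sx st by linarith
      qed
    qed
    moreover have "iota \<sigma> (1 / (M * x)) = \<sigma> (M * x)" by (simp add: iota_def)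
    ultimately have "\<sigma> (M * x) \<le> C * (q' ^ n * \<sigma> x + D0) + C"
      using Cb[OF s] C1 mult_left_mono[of _ _ C] by (smt (verit))
    then show ?thesis by (simp add: algebra_simps)
  qed
  have ev3: "eventually (\<lambda>x. 2 * (C * D0 + C) \<le> \<sigma> x \<and> 1 \<le> \<sigma> x) at_top"
    using lim by (auto simp: filterlim_at_top intro: eventually_conj)
  have "eventually (\<lambda>x. ereal (\<sigma> (K powr \<delta> * x) / \<sigma> x) \<le> ereal (C * q' ^ n + 1 / 2)) at_top"
    using ev3 eventually_gt_at_top[of "0::real"]
  proof eventually_elim
    case (elim x)
    have sp: "\<sigma> x > 0" using elim by simp
    have b: "\<sigma> (M * x) \<le> C * (q' ^ n * \<sigma> x) + (C * D0 + C)" using bound elim by simp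
    have "(C * D0 + C) \<le> \<sigma> x / 2" using elim by simp
    then have "\<sigma> (M * x) \<le> (C * q' ^ n + 1 / 2) * \<sigma> x" using b by (simp add: algebra_simps)
    then have "\<sigma> (M * x) / \<sigma> x \<le> C * q' ^ n + 1 / 2" using sp by (simp add: divide_le_eq)
    then show ?case using KM by simp
  qed
  then have "Limsup at_top (\<lambda>x. ereal (\<sigma> (K powr \<delta> * x) / \<sigma> x)) \<le> ereal (C * q' ^ n + 1 / 2)"
    by (rule Limsup_bounded)
  also have "\<dots> < ereal K"
  proof -
    have "(C + 1) * q' ^ n \<le> r ^ n * q' ^ n" using n qn by (intro mult_right_mono) auto
    moreover have "C * q' ^ n + 1 \<le> (C + 1) * q' ^ n" using qn by (simp add: algebra_simps)
    ultimately show ?thesis using Kr by simp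
  qed
  finally have lsK: "Limsup at_top (\<lambda>x. ereal (\<sigma> (K powr \<delta> * x) / \<sigma> x)) < ereal K" .
  have "K > 1"
  proof -
    have "(C + 1) * 1 \<le> r ^ n * q' ^ n" using n qn r1 by (intro mult_mono) auto
    then show ?thesis using Kr C1 by simp
  qed
  then show ?thesis unfolding P_prop_def \<delta>_def[symmetric] using lsK by blast
qed

theorem proposition2p22:
  fixes \<sigma> :: "real \<Rightarrow> real"
  assumes "\<forall>t\<ge>0. \<sigma> t \<ge> 0"
    and "mono_on {0..} \<sigma>"
    and "filterlim \<sigma> at_top at_top"
    and "equiv_on {0<..} (iota \<sigma>) (upper_conj (lower_conj (iota \<sigma>)))"
  shows "gamma_idx \<sigma> + 1 = gamma_idx (lower_conj (iota \<sigma>))"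
proof -
  note nn = assms(1) and lim = assms(3) and eqv = assms(4)
  let ?g = "lower_conj (iota \<sigma>)"
  define A where "A = {\<gamma>. \<gamma> > 0 \<and> P_prop \<sigma> \<gamma>}"
  define B where "B = {\<gamma>. \<gamma> > 0 \<and> P_prop ?g \<gamma>}"
  have Bc: "b \<in> B" if "0 < b" "b < 1" for b using partC[OF nn that] that by (simp add: B_def)
  have BA: "b - 1 \<in> A" if "b \<in> B" "b > 1" for b
    using partB[OF nn lim eqv, of b] that by (simp add: A_def B_def)
  have AB: "a + 1 \<in> B" if "a \<in> A" for a
    using partA[OF nn lim, of a] that by (simp add: A_def B_def)
  have "(1/2::real) \<in> B" using Bc by simp
  then have gB: "gamma_idx ?g = Sup (ereal ` B)" unfolding gamma_idx_def B_def by auto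
  show ?thesis
  proof (cases "A = {}")
    case True
    then have gA: "gamma_idx \<sigma> = 0" unfolding gamma_idx_def A_def by auto
    have le: "Sup (ereal ` B) \<le> 1"
    proof (rule Sup_least)
      fix y assume "y \<in> ereal ` B"
      then obtain b where b: "b \<in> B" "y = ereal b" by auto
      have "b \<le> 1" using BA[OF b(1)] True by force
      then show "y \<le> 1" using b by simp
    qed
    have ge: "1 \<le> Sup (ereal ` B)"
    proof (rule dense_le)
      fix y :: ereal assume y: "y < 1"
      have "max y 0 < 1" using y by simp
      then obtain z where z: "max y 0 < ereal z" "ereal z < 1" using ereal_dense2 by blast
      have "z > 0" "z < 1" using z by auto
      then have "z \<in> B" using Bc by simp
      then have "ereal z \<le> Sup (ereal ` B)" by (simp add: Sup_upper)
      moreover have "y < ereal z" using z by simp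
      ultimately show "y \<le> Sup (ereal ` B)" by simp
    qed
    show ?thesis using le ge gA gB by simp
  next
    case False
    then have gA: "gamma_idx \<sigma> = Sup (ereal ` A)" unfolding gamma_idx_def A_def by auto
    obtain a0 where a0: "a0 \<in> A" using False by auto
    have S0: "0 \<le> Sup (ereal ` A)"
    proof -
      have "ereal a0 \<le> Sup (ereal ` A)" using a0 by (simp add: Sup_upper)
      moreover have "a0 > 0" using a0 by (simp add: A_def)
      then have "(0::ereal) \<le> ereal a0" by simp
      ultimately show ?thesis by (rule order_trans[rotated])
    qed
    have le: "Sup (ereal ` B) \<le> Sup (ereal ` A) + 1"
    proof (rule Sup_least)
      fix y assume "y \<in> ereal ` B"
      then obtain b where b: "b \<in> B" "y = ereal b" by auto
      show "y \<le> Sup (ereal ` A) + 1"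
      proof (cases "b \<le> 1")
        case True
        have "ereal b \<le> 0 + 1" using True by simp
        also have "\<dots> \<le> Sup (ereal ` A) + 1" using S0 by (intro add_right_mono) auto
        finally show ?thesis using b by simp
      next
        case False
        have "ereal (b - 1) \<le> Sup (ereal ` A)" using BA[OF b(1)] False by (simp add: Sup_upper)
        then have "ereal (b - 1) + 1 \<le> Sup (ereal ` A) + 1" by (intro add_right_mono)
        then show ?thesis using b by simp
      qed
    qed
    have B1: "1 \<le> Sup (ereal ` B)"
    proof -
      have "ereal (a0 + 1) \<le> Sup (ereal ` B)" using AB[OF a0] by (simp add: Sup_upper)
      moreover have "a0 > 0" using a0 by (simp add: A_def)
      then have "(1::ereal) \<le> ereal (a0 + 1)" by simp
      ultimately show ?thesis by (rule order_trans[rotated])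
    qed
    have one: "\<bar>1::ereal\<bar> \<noteq> \<infinity>" by simp
    have "Sup (ereal ` A) \<le> Sup (ereal ` B) - 1"
    proof (rule Sup_least)
      fix y assume "y \<in> ereal ` A"
      then obtain a where a: "a \<in> A" "y = ereal a" by auto
      have "ereal (a + 1) \<le> Sup (ereal ` B)" using AB[OF a(1)] by (simp add: Sup_upper)
      then have "ereal a + 1 \<le> Sup (ereal ` B)" by simp
      then have "ereal a \<le> Sup (ereal ` B) - 1" using ereal_le_minus[OF one] by blast
      then show "y \<le> Sup (ereal ` B) - 1" using a(2) by simp
    qed
    then have ge: "Sup (ereal ` A) + 1 \<le> Sup (ereal ` B)"
      using ereal_le_minus[OF one] by blast
    show ?thesis using le ge gA gB by simp
  qed
qed

end
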